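(* Let $H$ be a finite graph with edges $e_1,\dots,e_m$. For each edge $e_i$ let $\theta_{e_i}\colon\{0,1\}^m\to\{0,1\}^m$ be the map flipping the $i$-th coordinate and fixing all others. Let $H'$ be the graph with vertex set $V(H)\times\{0,1\}^m$ and edge set $\{\{(u,\mathbf x),(v,\theta_{uv}(\mathbf x))\}: uv\in E(H),\ \mathbf x\in\{0,1\}^m\}$. If $H$ contains a cycle, then the girth of $H'$ is at least twice the girth of $H$.
   Context: The girth of a graph is the length of its shortest cycle (infinite if the graph is acyclic). *)

theory Defs
  imports Main "HOL-Library.Extended_Nat"
begin

definition finite_simple_graph :: "'v set \<Rightarrow> 'v set set \<Rightarrow> bool" where
  "finite_simple_graph V E \<longleftrightarrow> finite V \<and>
     (\<forall>e\<in>E. \<exists>u v. u \<noteq> v \<and> u \<in> V \<and> v \<in> V \<and> e = {u, v})"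

definition is_cycle :: "'v set \<Rightarrow> 'v set set \<Rightarrow> 'v list \<Rightarrow> bool" where
  "is_cycle V E cs \<longleftrightarrow> length cs \<ge> 3 \<and> distinct cs \<and> set cs \<subseteq> V \<and>
     (\<forall>i < length cs. {cs ! i, cs ! ((i + 1) mod length cs)} \<in> E)"

text \<open>Girth: length of a shortest cycle; infinite (top of enat) if there is no cycle.\<close>
definition girth :: "'v set \<Rightarrow> 'v set set \<Rightarrow> enat" where
  "girth V E = (INF cs \<in> {cs. is_cycle V E cs}. enat (length cs))"

definition flip :: "nat \<Rightarrow> bool list \<Rightarrow> bool list" where
  "flip i x = x[i := \<not> x ! i]"

text \<open>The graph H': edges of H are enumerated by the distinct list es (e_1..e_m).\<close>
definition cover_vertices :: "'v set \<Rightarrow> 'v set list \<Rightarrow> ('v \<times> bool list) set" where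
  "cover_vertices V es = V \<times> {x. length x = length es}"

definition cover_edges :: "'v set list \<Rightarrow> ('v \<times> bool list) set set" where
  "cover_edges es = {{(u, x), (v, flip i x)} | u v x i.
      i < length es \<and> es ! i = {u, v} \<and> length x = length es}"

end

theory Submission
  imports Defs
begin

lemma flip_len[simp]: "length (flip i x) = length x"
  by (simp add: flip_def)

lemma flip_flip: "i < length x \<Longrightarrow> flip i (flip i x) = x"
  by (simp add: flip_def)

lemma flip_nth: "i < length x \<Longrightarrow> flip i x ! k = (if k = i then \<not> x!i else x!k)"
  by (simp add: flip_def nth_list_update)

lemma cover_edge_dest:
  assumes "{p, q} \<in> cover_edges es"
  shows "\<exists>i<length es. es!i = {fst p, fst q} \<and> length (snd p) = length es \<and> snd q = flip i (snd p)"
proof -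
  from assms obtain u v x i where h: "{p, q} = {(u, x), (v, flip i x)}" "i < length es"
    "es ! i = {u, v}" "length x = length es"
    unfolding cover_edges_def by blast
  from h(1) have "(p = (u, x) \<and> q = (v, flip i x)) \<or> (p = (v, flip i x) \<and> q = (u, x))"
    by (auto simp: doubleton_eq_iff)
  then show ?thesis
  proof
    assume "p = (u, x) \<and> q = (v, flip i x)"
    then show ?thesis using h by auto
  next
    assume a: "p = (v, flip i x) \<and> q = (u, x)"
    have "snd q = flip i (snd p)" using a h by (simp add: flip_flip)
    then show ?thesis using a h by (auto simp: insert_commute)
  qed
qed

lemma mod_two_step: "(L::nat) \<ge> 3 \<Longrightarrow> j mod L = Suc (Suc j) mod L \<Longrightarrow> False"
proof -
  assume L: "L \<ge> 3" and e: "j mod L = Suc (Suc j) mod L"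
  have "L dvd (Suc (Suc j) - j)" using e mod_eq_dvd_iff_nat[of j "Suc (Suc j)" L] by simp
  then have "L dvd 2" by simp
  then have "L \<le> 2" by (rule dvd_imp_le) simp
  with L show False by simp
qed

theorem mainTheorem8:
  fixes V :: "'v set" and E :: "'v set set" and es :: "'v set list"
  assumes "finite_simple_graph V E"
    and "distinct es" and "set es = E"
    and "\<exists>cs. is_cycle V E cs"
  shows "girth (cover_vertices V es) (cover_edges es) \<ge> 2 * girth V E"
proof -
  define m where "m = length es"
  have main: "2 * girth V E \<le> enat (length cs')"
    if cyc: "is_cycle (cover_vertices V es) (cover_edges es) cs'" for cs'
  proof -
    define L where "L = length cs'"
    have L3: "L \<ge> 3" using cyc by (simp add: is_cycle_def L_def)
    have dcs: "distinct cs'" using cyc by (simp add: is_cycle_def)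
    define n where "n j = cs' ! (j mod L)" for j
    define w where "w j = fst (n j)" for j
    define x where "x j = snd (n j)" for j
    have nw: "n j = (w j, x j)" for j by (simp add: w_def x_def)
    have nV: "n j \<in> cover_vertices V es" for j
    proof -
      have "j mod L < length cs'" using L3 unfolding L_def by (intro mod_less_divisor) linarith
      then show ?thesis using cyc unfolding is_cycle_def n_def by (meson nth_mem subsetD)
    qed
    have wV: "w j \<in> V" for j
      using nV[of j] nw[of j] unfolding cover_vertices_def by auto
    have xlen: "length (x j) = m" for j
      using nV[of j] nw[of j] unfolding cover_vertices_def m_def by auto
    have nE: "{n j, n (Suc j)} \<in> cover_edges es" for j
    proof -
      have "j mod L < length cs'" using L3 unfolding L_def by (intro mod_less_divisor) linarith
      then have "{cs' ! (j mod L), cs' ! ((j mod L + 1) mod L)} \<in> cover_edges es"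
        using cyc unfolding is_cycle_def L_def by blast
      moreover have "(j mod L + 1) mod L = Suc j mod L" by (simp add: mod_Suc_eq)
      ultimately show ?thesis by (simp add: n_def)
    qed
    have "\<forall>j. \<exists>i. i < m \<and> es!i = {w j, w (Suc j)} \<and> x (Suc j) = flip i (x j)"
      using cover_edge_dest[OF nE] unfolding w_def x_def m_def by blast
    then obtain idx where idx: "\<And>j. idx j < m" "\<And>j. es!(idx j) = {w j, w (Suc j)}"
      "\<And>j. x (Suc j) = flip (idx j) (x j)"
      by metis
    have uniq: "\<And>i i'. i<m \<Longrightarrow> i'<m \<Longrightarrow> es!i = es!i' \<Longrightarrow> i = i'"
      using assms(2) by (simp add: nth_eq_iff_index_eq m_def)
    have Eidx: "es!(idx j) \<in> E" for j using idx(1) assms(3) by (auto simp: m_def)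
    have adj_ne: "w j \<noteq> w (Suc j)" for j
    proof
      assume eq: "w j = w (Suc j)"
      obtain a b where "a \<noteq> b" "es!(idx j) = {a, b}"
        using Eidx[of j] assms(1) unfolding finite_simple_graph_def by blast
      then show False using idx(2)[of j] eq by (auto simp: doubleton_eq_iff)
    qed
    have nobt: "w j \<noteq> w (Suc (Suc j))" for j
    proof
      assume eq: "w j = w (Suc (Suc j))"
      have "es!(idx (Suc j)) = es!(idx j)" using idx(2)[of j] idx(2)[of "Suc j"] eq
        by (simp add: insert_commute)
      then have ii: "idx (Suc j) = idx j" using uniq idx(1) by blast
      have "x (Suc (Suc j)) = x j" using idx(3)[of "Suc j"] idx(3)[of j] ii idx(1)[of j] xlen[of j]
        by (simp add: flip_flip)
      then have "n (Suc (Suc j)) = n j" using nw eq by simp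
      then have "cs' ! (j mod L) = cs' ! (Suc (Suc j) mod L)" by (simp add: n_def)
      moreover have "j mod L < length cs'" "Suc (Suc j) mod L < length cs'"
        using L3 unfolding L_def by (auto intro!: mod_less_divisor)
      ultimately have "j mod L = Suc (Suc j) mod L" using dcs by (simp add: nth_eq_iff_index_eq)
      then show False using mod_two_step L3 by blast
    qed
    have par: "x k ! i = (x 0 ! i \<noteq> odd (card {j. j < k \<and> idx j = i}))" if "i < m" for k i
    proof (induction k)
      case 0 then show ?case by simp
    next
      case (Suc k)
      have fin: "finite {j. j < k \<and> idx j = i}" by simp
      show ?case
      proof (cases "idx k = i")
        case True
        have "{j. j < Suc k \<and> idx j = i} = insert k {j. j < k \<and> idx j = i}"
          using True by auto
        then have "card {j. j < Suc k \<and> idx j = i} = Suc (card {j. j < k \<and> idx j = i})"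
          using fin by simp
        then show ?thesis using Suc True idx(3)[of k] that xlen[of k] by (simp add: flip_nth)
      next
        case False
        have "{j. j < Suc k \<and> idx j = i} = {j. j < k \<and> idx j = i}"
          using False less_Suc_eq by auto
        then show ?thesis using Suc False idx(3)[of k] idx(1)[of k] xlen[of k] by (simp add: flip_nth)
      qed
    qed
    have xL: "x L = x 0" by (simp add: x_def n_def)
    have evn: "even (card {j. j < L \<and> idx j = i})" if "i < m" for i
      using par[OF that, of L] xL by (cases "x 0 ! i") auto
    define U where "U = idx ` {..<L}"
    have finU: "finite U" by (simp add: U_def)
    have "{..<L} = (\<Union>i\<in>U. {j. j < L \<and> idx j = i})" by (auto simp: U_def)
    moreover have "card (\<Union>i\<in>U. {j. j < L \<and> idx j = i}) = (\<Sum>i\<in>U. card {j. j < L \<and> idx j = i})"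
      using finU by (intro card_UN_disjoint) auto
    ultimately have "card {..<L} = (\<Sum>i\<in>U. card {j. j < L \<and> idx j = i})" by simp
    moreover have "(\<Sum>i\<in>U. card {j. j < L \<and> idx j = i}) \<ge> (\<Sum>i\<in>U. 2)"
    proof (rule sum_mono)
      fix i assume iU: "i \<in> U"
      then obtain j where j: "j < L" "idx j = i" by (auto simp: U_def)
      have "card {j. j < L \<and> idx j = i} \<noteq> 0" using j by auto
      moreover have "even (card {j. j < L \<and> idx j = i})" using evn idx(1) j by blast
      ultimately show "2 \<le> card {j. j < L \<and> idx j = i}" by presburger
    qed
    ultimately have LU: "2 * card U \<le> L" by simp
    define P where "P d = (0 < d \<and> (\<exists>a. a + d \<le> L \<and> w a = w (a + d)))" for d
    have "w L = w 0" by (simp add: w_def n_def)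
    then have PL: "P L" using L3 unfolding P_def by (metis add_0 le_refl not_numeral_le_zero neq0_conv)
    define d where "d = Least P"
    have Pd: "P d" unfolding d_def by (rule LeastI[of P L, OF PL])
    then obtain a where a: "0 < d" "a + d \<le> L" "w a = w (a + d)" unfolding P_def by blast
    have dist: "w (a + p) \<noteq> w (a + q)" if "p < q" "q < d" for p q
    proof
      assume "w (a + p) = w (a + q)"
      then have "P (q - p)" unfolding P_def using that a
        by (intro conjI exI[of _ "a + p"]) auto
      then have "d \<le> q - p" unfolding d_def by (rule Least_le)
      then show False using that by simp
    qed
    have "d \<noteq> 1" using a adj_ne[of a] by auto
    moreover have "d \<noteq> 2" using a nobt[of a] by (auto simp: numeral_2_eq_2)
    ultimately have d3: "d \<ge> 3" using a(1) by linarith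
    define cs where "cs = map (\<lambda>p. w (a + p)) [0..<d]"
    have edge: "{cs ! p, cs ! ((p + 1) mod d)} = es ! (idx (a + p))" if "p < d" for p
    proof (cases "p + 1 < d")
      case True
      then show ?thesis using that idx(2)[of "a+p"] by (simp add: cs_def)
    next
      case False
      then have "p + 1 = d" using that by simp
      then have "Suc (a + p) = a + d" by simp
      then have wa: "w (Suc (a + p)) = w a" using a(3) by metis
      have "cs ! p = w (a + p)" "cs ! ((p + 1) mod d) = w a"
        using that \<open>p + 1 = d\<close> d3 by (auto simp: cs_def)
      then show ?thesis using idx(2)[of "a+p"] wa by simp
    qed
    have "is_cycle V E cs"
      unfolding is_cycle_def
    proof (intro conjI allI impI)
      show "3 \<le> length cs" using d3 by (simp add: cs_def)
      show "distinct cs" unfolding cs_def distinct_conv_nth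
        using dist by (auto simp: nat_neq_iff) (metis dist less_trans)
      show "set cs \<subseteq> V" using wV by (auto simp: cs_def)
      fix p assume "p < length cs"
      then have "p < d" by (simp add: cs_def)
      then show "{cs ! p, cs ! ((p + 1) mod length cs)} \<in> E"
        using edge Eidx by (simp add: cs_def)
    qed
    then have gd: "girth V E \<le> enat d"
      unfolding girth_def by (metis (mono_tags, lifting) INF_lower cs_def diff_zero length_map
          length_upt mem_Collect_eq)
    have neq: "idx (a + p) \<noteq> idx (a + q)" if "p < q" "q < d" for p q
    proof
      assume "idx (a + p) = idx (a + q)"
      then have "{w (a + p), w (Suc (a + p))} = {w (a + q), w (Suc (a + q))}"
        using idx(2) by metis
      then have "w (a + p) = w (Suc (a + q)) \<and> w (Suc (a + p)) = w (a + q)"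
        using dist[OF that] by (auto simp: doubleton_eq_iff)
      then show False
      proof (cases "Suc p = q")
        case True
        then show ?thesis using \<open>w (a + p) = w (Suc (a + q)) \<and> _\<close> nobt[of "a+p"] by (metis add_Suc_right)
      next
        case False
        then have "Suc p < q" using that by simp
        then show ?thesis using \<open>w (a + p) = w (Suc (a + q)) \<and> _\<close> dist[of "Suc p" q] that by simp
      qed
    qed
    have "inj_on (\<lambda>p. idx (a + p)) {..<d}"
      unfolding inj_on_def using neq by (metis lessThan_iff nat_neq_iff)
    moreover have "(\<lambda>p. idx (a + p)) ` {..<d} \<subseteq> U" using a(2) by (auto simp: U_def)
    ultimately have "d \<le> card U" using card_inj_on_le finU by fastforce
    with LU have "2 * d \<le> L" by simp
    have "2 * girth V E \<le> 2 * enat d" using gd by (simp add: mult_left_mono)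
    also have "\<dots> = enat (2 * d)" by (simp add: numeral_eq_enat)
    also have "\<dots> \<le> enat L" using \<open>2 * d \<le> L\<close> by simp
    finally show ?thesis by (simp add: L_def)
  qed
  show ?thesis unfolding girth_def[of "cover_vertices V es"]
    by (rule INF_greatest) (use main in auto)
qed

end
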